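(* Let $k\ge2$, let $\Pi\subsetneq\Sigma_k$ be a proper subshift, and let $T:\Pi\to\Sigma_k$ be the map constructed below. If $y,\tilde y\in\Pi$ form a DC1 pair, then $T(y),T(\tilde y)$ form a DC1 pair.
   Context: $\Sigma_k=\{0,\dots,k-1\}^{\mathbb{N}}$ with metric $d(x,y)=\sum_{n\ge1}\delta(x_n,y_n)/2^n$ ($\delta(a,b)=0$ if $a=b$, $1$ otherwise) and shift $\sigma$. A subshift is a nonempty closed $\sigma$-invariant subset; a finite word is contained in $\Pi$ if it is a prefix of some point of $\Pi$. Construction of $T$: enumerate all finite words contained in $\Pi$ as $C_1,C_2,\dots$; fix a finite word $A_1$ not contained in $\Pi$; for $y\in\Pi$ let $Y_n$ be its first $n$ symbols; $B_n=C_nY_n\cdots Y_n$ ($Y_n$ repeated $|A_n|^2$ times), $A_{n+1}=A_nB_nA_n$; $T(y)$ is the point having every $A_n$ as prefix; the construction requires $|C_n|=o(|A_n|)$. With $\Phi^{(n)}_{xy}(t)=\frac1n|\{0\le i<n: d(\sigma^ix,\sigma^iy)<t\}|$, a pair $(x,y)$ is DC1 if $\liminf_n\Phi^{(n)}_{xy}(s)=0$ for some $s>0$ and $\limsup_n\Phi^{(n)}_{xy}(t)=1$ for all $t>0$. *)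

theory Defs
  imports "HOL-Analysis.Analysis" "HOL-Library.Extended_Real" "HOL-Library.Liminf_Limsup"
begin

text \<open>Points of the full shift are sequences nat => nat; index i here is the
  paper's coordinate i+1.\<close>

definition FullShift :: "nat \<Rightarrow> (nat \<Rightarrow> nat) set" where
  "FullShift k = {x. \<forall>i. x i < k}"

definition shiftd :: "(nat \<Rightarrow> nat) \<Rightarrow> (nat \<Rightarrow> nat) \<Rightarrow> real" where
  "shiftd x y = (\<Sum>n. (if x n = y n then 0 else 1) / 2 ^ (Suc n))"

definition sigma :: "(nat \<Rightarrow> nat) \<Rightarrow> (nat \<Rightarrow> nat)" where
  "sigma x = (\<lambda>j. x (Suc j))"

definition subshift :: "nat \<Rightarrow> (nat \<Rightarrow> nat) set \<Rightarrow> bool" where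
  "subshift k P \<longleftrightarrow> P \<noteq> {} \<and> P \<subseteq> FullShift k
     \<and> (\<forall>x\<in>FullShift k. (\<forall>e>0. \<exists>y\<in>P. shiftd x y < e) \<longrightarrow> x \<in> P)
     \<and> sigma ` P \<subseteq> P"

definition is_prefix :: "nat list \<Rightarrow> (nat \<Rightarrow> nat) \<Rightarrow> bool" where
  "is_prefix w x \<longleftrightarrow> (\<forall>i<length w. x i = w ! i)"

definition contained :: "(nat \<Rightarrow> nat) set \<Rightarrow> nat list \<Rightarrow> bool" where
  "contained P w \<longleftrightarrow> (\<exists>x\<in>P. is_prefix w x)"

text \<open>Aw A1 C y n is the paper's A_{n+1}; C n is the paper's C_{n+1};
  the paper's Y_{n+1} is take (n+1) of y.\<close>
fun Aw :: "nat list \<Rightarrow> (nat \<Rightarrow> nat list) \<Rightarrow> (nat \<Rightarrow> nat) \<Rightarrow> nat \<Rightarrow> nat list" where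
  "Aw A1 C y 0 = A1"
| "Aw A1 C y (Suc n) =
     (let A = Aw A1 C y n;
          B = C n @ concat (replicate (length A ^ 2) (map y [0..<Suc n]))
      in A @ B @ A)"

definition Tmap :: "nat list \<Rightarrow> (nat \<Rightarrow> nat list) \<Rightarrow> (nat \<Rightarrow> nat) \<Rightarrow> (nat \<Rightarrow> nat)" where
  "Tmap A1 C y = (THE x. \<forall>n. is_prefix (Aw A1 C y n) x)"

definition Phi :: "(nat \<Rightarrow> nat) \<Rightarrow> (nat \<Rightarrow> nat) \<Rightarrow> nat \<Rightarrow> real \<Rightarrow> real" where
  "Phi x y n t = card {i. i < n \<and> shiftd ((sigma ^^ i) x) ((sigma ^^ i) y) < t} / real n"

definition DC1 :: "(nat \<Rightarrow> nat) \<Rightarrow> (nat \<Rightarrow> nat) \<Rightarrow> bool" where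
  "DC1 x y \<longleftrightarrow>
     (\<exists>s>0. liminf (\<lambda>n. ereal (Phi x y n s)) = 0)
   \<and> (\<forall>t>0. limsup (\<lambda>n. ereal (Phi x y n t)) = 1)"

end

theory Submission
  imports Defs
begin

lemma sigma_pow: "(sigma ^^ i) x = (\<lambda>l. x (i + l))"
  by (induction i) (auto simp: sigma_def)

definition tm :: "(nat \<Rightarrow> nat) \<Rightarrow> (nat \<Rightarrow> nat) \<Rightarrow> nat \<Rightarrow> real" where
  "tm u v n = (if u n = v n then 0 else 1) / 2 ^ Suc n"

lemma summable_half: "summable (\<lambda>n. (1/2::real) ^ Suc n)"
  using summable_mult[OF summable_geometric[of "1/2::real"], of "1/2"] by simp

lemma summable_tm: "summable (tm u v)"
proof (rule summable_comparison_test'[OF summable_half])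
  fix n show "norm (tm u v n) \<le> (1/2) ^ Suc n" by (simp add: tm_def power_one_over)
qed

lemma shiftd_tm: "shiftd u v = suminf (tm u v)"
  by (simp add: shiftd_def tm_def[abs_def])

lemma shiftd_close:
  assumes "\<forall>l<L. u l = u' l \<and> v l = v' l"
  shows "\<bar>shiftd u v - shiftd u' v'\<bar> \<le> 1 / 2 ^ L"
proof -
  define h where "h n = (if n < L then 0 else (1/2::real) ^ Suc n)" for n
  have hs: "summable h"
    by (rule summable_comparison_test'[OF summable_half]) (auto simp: h_def)
  have d: "\<bar>tm u v n - tm u' v' n\<bar> \<le> h n" for n
    using assms by (auto simp: tm_def h_def power_one_over)
  have s1: "summable (\<lambda>n. \<bar>tm u v n - tm u' v' n\<bar>)"
    by (rule summable_comparison_test'[OF hs]) (use d in auto)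
  have "shiftd u v - shiftd u' v' = suminf (\<lambda>n. tm u v n - tm u' v' n)"
    unfolding shiftd_tm using suminf_diff[OF summable_tm summable_tm] by simp
  then have "\<bar>shiftd u v - shiftd u' v'\<bar> \<le> (\<Sum>n. \<bar>tm u v n - tm u' v' n\<bar>)"
    using summable_rabs[OF s1] by simp
  also have "\<dots> \<le> suminf h" by (rule suminf_le[OF d s1 hs])
  also have "suminf h = (\<Sum>n. h (n + L))"
    using suminf_split_initial_segment[OF hs, of L] by (simp add: h_def)
  also have "\<dots> = (\<Sum>n. (1/2::real)^Suc L * (1/2)^n)"
    by (simp add: h_def power_add mult_ac)
  also have "\<dots> = (1/2)^Suc L * 2"
    by (subst suminf_mult) (auto simp: suminf_geometric summable_geometric)
  also have "\<dots> = 1 / 2 ^ L" by (simp add: power_one_over)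
  finally show ?thesis .
qed


lemma len_concat_rep: "length (concat (replicate r (map y [0..<p]))) = r * p"
  by (induction r) auto

lemma length_Aw_indep: "length (Aw A1 C y n) = length (Aw A1 C z n)"
  by (induction n) (auto simp: Let_def len_concat_rep simp del: upt_Suc)

lemma length_Aw_Suc: "length (Aw A1 C y (Suc n)) =
   2 * length (Aw A1 C y n) + length (C n) + length (Aw A1 C y n)^2 * Suc n"
  by (simp add: Let_def len_concat_rep del: upt_Suc)

lemma length_Aw_ge: "A1 \<noteq> [] \<Longrightarrow> Suc n \<le> length (Aw A1 C y n)"
proof (induction n)
  case 0 then show ?case by (cases A1) auto
next
  case (Suc n) then show ?case unfolding length_Aw_Suc by simp
qed

lemma Aw_mono: "n \<le> m \<Longrightarrow> \<exists>w. Aw A1 C y m = Aw A1 C y n @ w"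
proof (induction m rule: dec_induct)
  case base then show ?case by simp
next
  case (step m)
  then obtain w where "Aw A1 C y m = Aw A1 C y n @ w" by blast
  then show ?case by (simp add: Let_def)
qed

lemma Tmap_prefix:
  assumes "A1 \<noteq> []"
  shows "is_prefix (Aw A1 C y n) (Tmap A1 C y)"
proof -
  define x where "x i = Aw A1 C y i ! i" for i
  have agree: "i < length (Aw A1 C y n) \<Longrightarrow> Aw A1 C y n ! i = Aw A1 C y m ! i"
    if "n \<le> m" for i n m
    using Aw_mono[OF that, of A1 C y] by (auto simp: nth_append)
  have px: "is_prefix (Aw A1 C y n) x" for n
    unfolding is_prefix_def x_def
  proof (intro allI impI)
    fix i assume i: "i < length (Aw A1 C y n)"
    have li: "i < length (Aw A1 C y i)" using length_Aw_ge[OF assms, of i C y] by simp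
    show "Aw A1 C y i ! i = Aw A1 C y n ! i"
    proof (cases "n \<le> i")
      case True then show ?thesis using agree[OF True i] by simp
    next
      case False then show ?thesis using agree[of i n, OF _ li] by simp
    qed
  qed
  have uniq: "z = x" if "\<forall>n. is_prefix (Aw A1 C y n) z" for z
  proof
    fix i
    have "i < length (Aw A1 C y i)" using length_Aw_ge[OF assms, of i C y] by simp
    then show "z i = x i" using that unfolding is_prefix_def x_def by blast
  qed
  have "Tmap A1 C y = x"
    unfolding Tmap_def by (rule the_equality) (use px uniq in auto)
  then show ?thesis using px by simp
qed

lemma nth_concat_rep: "i < r * p \<Longrightarrow> concat (replicate r (map y [0..<p])) ! i = y (i mod p)"
proof (induction r arbitrary: i)
  case 0 then show ?case by simp
next
  case (Suc r)
  show ?case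
  proof (cases "i < p")
    case True then show ?thesis by (simp add: nth_append)
  next
    case False
    then have "i - p < r * p" using Suc.prems by simp
    from Suc.IH[OF this] False show ?thesis
      by (simp add: nth_append le_mod_geq)
  qed
qed

lemma Tmap_block:
  assumes "A1 \<noteq> []" and "i < length (Aw A1 C y n)^2 * Suc n"
  shows "Tmap A1 C y (length (Aw A1 C y n) + length (C n) + i) = y (i mod Suc n)"
proof -
  have "is_prefix (Aw A1 C y (Suc n)) (Tmap A1 C y)" by (rule Tmap_prefix[OF assms(1)])
  moreover have "length (Aw A1 C y n) + length (C n) + i < length (Aw A1 C y (Suc n))"
    using assms(2) unfolding length_Aw_Suc by simp
  ultimately have "Tmap A1 C y (length (Aw A1 C y n) + length (C n) + i)
     = Aw A1 C y (Suc n) ! (length (Aw A1 C y n) + length (C n) + i)"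
    unfolding is_prefix_def by blast
  also have "\<dots> = y (i mod Suc n)"
    using assms(2) by (simp add: Let_def nth_append len_concat_rep nth_concat_rep del: upt_Suc)
  finally show ?thesis .
qed


definition D :: "(nat \<Rightarrow> nat) \<Rightarrow> (nat \<Rightarrow> nat) \<Rightarrow> nat \<Rightarrow> real" where
  "D x x' i = shiftd ((sigma ^^ i) x) ((sigma ^^ i) x')"

lemma block_close:
  assumes blk: "\<forall>i<R*p. x (ofs+i) = y (i mod p) \<and> x' (ofs+i) = y' (i mod p)"
    and q: "q < R" and j: "j < p"
  shows "\<bar>D x x' (ofs+q*p+j) - D y y' j\<bar> \<le> 1 / 2 ^ (p - j)"
  unfolding D_def sigma_pow
proof (rule shiftd_close, intro allI impI)
  fix l assume l: "l < p - j"
  have "q*p + p \<le> R*p" using q by (metis Suc_leI mult_Suc mult.commute add.commute mult_le_mono1)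
  then have lt: "q*p + j + l < R*p" using l by linarith
  have jl: "j + l < p" using l j by linarith
  have md: "(q*p + j + l) mod p = j + l" using jl by (simp add: add.assoc)
  show "x (ofs + q * p + j + l) = y (j + l) \<and> x' (ofs + q * p + j + l) = y' (j + l)"
    using blk[rule_format, OF lt] md by (simp add: add.assoc)
qed

lemma card_drop_m: "card {j. j < p \<and> P j} \<le> card {j. j < p - m \<and> P j} + m"
proof -
  have "{j. j < p \<and> P j} \<subseteq> {j. j < p - m \<and> P j} \<union> {p-m..<p}" by auto
  then have "card {j. j < p \<and> P j} \<le> card ({j. j < p - m \<and> P j} \<union> {p-m..<p})"
    by (intro card_mono) auto
  also have "\<dots> \<le> card {j. j < p - m \<and> P j} + card {p-m..<p}" by (rule card_Un_le)
  also have "card {p-m..<p} \<le> m" by simp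
  finally show ?thesis by simp
qed

lemma inj_blk: "inj_on (\<lambda>(q,j). ofs + q*p + (j::nat)) ({..<R} \<times> {..<p})"
proof (rule inj_onI, clarsimp)
  fix q j q' j' assume "q*p + j = q'*p + j'" "j < p" "j' < p"
  then have "(q*p + j) div p = (q'*p+j') div p" "(q*p + j) mod p = (q'*p+j') mod p" by simp_all
  with \<open>j<p\<close> \<open>j'<p\<close> show "q = q' \<and> j = j'" by simp
qed

lemma block_lower:
  assumes blk: "\<forall>i<R*p. x (ofs+i) = y (i mod p) \<and> x' (ofs+i) = y' (i mod p)"
  shows "R * (card {j. j < p \<and> D y y' j < t - 1/2^m} - m) \<le> card {i. i < ofs + R*p \<and> D x x' i < t}"
proof -
  define E0 where "E0 = {j. j < p - m \<and> D y y' j < t - 1/2^m}"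
  define f where "f = (\<lambda>(q,j). ofs + q*p + (j::nat))"
  have sub: "f ` ({..<R} \<times> E0) \<subseteq> {i. i < ofs + R*p \<and> D x x' i < t}"
  proof clarsimp
    fix q j assume q: "q < R" and jE: "j \<in> E0"
    then have j: "j < p - m" and dj: "D y y' j < t - 1/2^m" by (auto simp: E0_def)
    have "q*p + p \<le> R*p" using q by (metis Suc_leI mult_Suc mult.commute add.commute mult_le_mono1)
    then have "f (q,j) < ofs + R*p" using j by (simp add: f_def)
    moreover
    have c: "\<bar>D x x' (ofs+q*p+j) - D y y' j\<bar> \<le> 1 / 2 ^ (p - j)"
      using block_close[OF blk q] j by simp
    have "(1::real) / 2 ^ (p - j) \<le> 1 / 2 ^ m"
      using j by (intro divide_left_mono power_increasing) auto
    with c dj have "D x x' (f (q,j)) < t" by (simp add: f_def)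
    ultimately show "f (q,j) < ofs + R*p \<and> D x x' (f (q,j)) < t" by simp
  qed
  have inj: "inj_on f ({..<R} \<times> E0)"
    by (rule inj_on_subset[OF inj_blk[of ofs p R, folded f_def]]) (auto simp: E0_def)
  have "R * (card {j. j < p \<and> D y y' j < t - 1/2^m} - m) \<le> R * card E0"
    using card_drop_m[of p "\<lambda>j. D y y' j < t - 1/2^m" m] unfolding E0_def
    by (intro mult_le_mono2) linarith
  also have "\<dots> = card (f ` ({..<R} \<times> E0))"
    by (simp add: card_image[OF inj] card_cartesian_product)
  also have "\<dots> \<le> card {i. i < ofs + R*p \<and> D x x' i < t}"
    by (rule card_mono[OF _ sub]) simp
  finally show ?thesis .
qed

lemma block_upper:
  assumes blk: "\<forall>i<R*p. x (ofs+i) = y (i mod p) \<and> x' (ofs+i) = y' (i mod p)" and p: "p > 0"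
  shows "card {i. i < ofs + R*p \<and> D x x' i < t} \<le> ofs + R * (card {j. j < p \<and> D y y' j < t + 1/2^m} + m)"
proof -
  define E1 where "E1 = {j. j < p - m \<and> D y y' j < t + 1/2^m} \<union> {p-m..<p}"
  define f where "f = (\<lambda>(q,j). ofs + q*p + (j::nat))"
  have sub: "{i. i < ofs + R*p \<and> D x x' i < t} \<subseteq> {..<ofs} \<union> f ` ({..<R} \<times> E1)"
  proof (rule subsetI)
    fix i assume "i \<in> {i. i < ofs + R*p \<and> D x x' i < t}"
    then have i: "i < ofs + R*p" and di: "D x x' i < t" by auto
    show "i \<in> {..<ofs} \<union> f ` ({..<R} \<times> E1)"
    proof (cases "i < ofs")
      case True then show ?thesis by simp
    next
      case io: False
    define q where "q = (i - ofs) div p"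
    define j where "j = (i - ofs) mod p"
    have ieq: "i = ofs + q*p + j" using io by (simp add: q_def j_def)
    have j: "j < p" using p by (simp add: j_def)
    have q: "q < R" using i io p by (simp add: q_def less_mult_imp_div_less)
    have "j \<in> E1"
    proof (cases "j < p - m")
      case True
      have c: "\<bar>D x x' (ofs+q*p+j) - D y y' j\<bar> \<le> 1 / 2 ^ (p - j)"
        using block_close[OF blk q j] .
      have "(1::real) / 2 ^ (p - j) \<le> 1 / 2 ^ m"
        using True by (intro divide_left_mono power_increasing) auto
      with c di ieq have "D y y' j < t + 1/2^m" by simp
      with True show ?thesis by (simp add: E1_def)
    next
      case False with j show ?thesis by (simp add: E1_def)
    qed
    then show ?thesis using q ieq
      by (auto simp: f_def intro!: image_eqI[where x="(q,j)"])
  qed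
  qed
  have "card {i. i < ofs + R*p \<and> D x x' i < t} \<le> card ({..<ofs} \<union> f ` ({..<R} \<times> E1))"
    by (rule card_mono[OF _ sub]) (simp add: E1_def)
  also have "\<dots> \<le> ofs + card (f ` ({..<R} \<times> E1))"
    using card_Un_le[of "{..<ofs}"] by simp
  also have "card (f ` ({..<R} \<times> E1)) \<le> R * card E1"
    using card_image_le[of "{..<R} \<times> E1" f] by (simp add: card_cartesian_product E1_def)
  also have "card E1 \<le> card {j. j < p \<and> D y y' j < t + 1/2^m} + m"
  proof -
    have "card E1 \<le> card {j. j < p - m \<and> D y y' j < t + 1/2^m} + card {p-m..<p}"
      unfolding E1_def by (rule card_Un_le)
    also have "card {j. j < p - m \<and> D y y' j < t + 1/2^m} \<le> card {j. j < p \<and> D y y' j < t + 1/2^m}"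
      by (rule card_mono) auto
    also have "card {p-m..<p} \<le> m" by simp
    finally show ?thesis by simp
  qed
  finally show ?thesis by (simp add: mult_le_mono2) 
qed


lemma liminf_zeroI:
  assumes "\<And>n. 0 \<le> f n" and "\<And>e M. e > 0 \<Longrightarrow> \<exists>n\<ge>M. f n < e"
  shows "liminf (\<lambda>n. ereal (f n)) = 0"
proof (rule antisym)
  show "liminf (\<lambda>n. ereal (f n)) \<le> 0"
    unfolding liminf_SUP_INF
  proof (rule SUP_least)
    fix M :: nat
    show "(INF m\<in>{M..}. ereal (f m)) \<le> 0"
    proof (rule ereal_le_epsilon2)
      fix e :: real assume "e > 0"
      then obtain n where "n \<ge> M" "f n < e" using assms(2) by blast
      then have "(INF m\<in>{M..}. ereal (f m)) \<le> ereal (f n)" by (intro INF_lower) auto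
      also have "\<dots> \<le> 0 + ereal e" using \<open>f n < e\<close> by simp
      finally show "(INF m\<in>{M..}. ereal (f m)) \<le> 0 + ereal e" .
    qed
  qed
  show "0 \<le> liminf (\<lambda>n. ereal (f n))"
    unfolding liminf_SUP_INF
    by (rule order_trans[OF _ SUP_upper[of 0]]) (auto intro!: INF_greatest simp: assms(1))
qed

lemma liminf_zeroD:
  assumes "liminf (\<lambda>n. ereal (f n)) = 0" and "e > 0"
  shows "\<exists>n\<ge>M. f n < e"
proof -
  have "(INF m\<in>{M..}. ereal (f m)) \<le> 0"
    using assms(1) unfolding liminf_SUP_INF by (metis SUP_upper UNIV_I)
  also have "\<dots> < ereal e" using assms(2) by simp
  finally obtain n where "n \<in> {M..}" "ereal (f n) < ereal e" by (auto simp: INF_less_iff)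
  then show ?thesis by auto
qed

lemma limsup_oneI:
  assumes "\<And>n. f n \<le> 1" and "\<And>e M. e > 0 \<Longrightarrow> \<exists>n\<ge>M. f n > 1 - e"
  shows "limsup (\<lambda>n. ereal (f n)) = 1"
proof (rule antisym)
  show "limsup (\<lambda>n. ereal (f n)) \<le> 1"
    unfolding limsup_INF_SUP
    by (rule order_trans[OF INF_lower[of 0]]) (auto intro!: SUP_least simp: assms(1))
  show "1 \<le> limsup (\<lambda>n. ereal (f n))"
    unfolding limsup_INF_SUP
  proof (rule INF_greatest)
    fix M :: nat
    show "1 \<le> (SUP m\<in>{M..}. ereal (f m))"
    proof (rule ereal_le_epsilon2)
      fix e :: real assume "e > 0"
      then obtain n where "n \<ge> M" "f n > 1 - e" using assms(2) by blast
      then have "1 \<le> ereal (f n) + ereal e" by simp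
      also have "ereal (f n) \<le> (SUP m\<in>{M..}. ereal (f m))" using \<open>n \<ge> M\<close> by (intro SUP_upper) auto
      finally show "1 \<le> (SUP m\<in>{M..}. ereal (f m)) + ereal e" by - (simp add: add_right_mono)
    qed
  qed
qed

lemma limsup_oneD:
  assumes "limsup (\<lambda>n. ereal (f n)) = 1" and "e > 0"
  shows "\<exists>n\<ge>M. f n > 1 - e"
proof -
  have "ereal (1 - e) < 1" using assms(2) by simp
  also have "1 \<le> (SUP m\<in>{M..}. ereal (f m))"
    using assms(1) unfolding limsup_INF_SUP by (metis INF_lower UNIV_I)
  finally obtain n where "n \<in> {M..}" "ereal (1 - e) < ereal (f n)" by (auto simp: less_SUP_iff)
  then show ?thesis by auto
qed

lemma Phi_D: "Phi x x' n t = card {i. i < n \<and> D x x' i < t} / real n"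
  by (simp add: Phi_def D_def)

lemma Phi_nonneg: "0 \<le> Phi x x' n t" by (simp add: Phi_def)

lemma Phi_le1: "Phi x x' n t \<le> 1"
proof -
  have "card {i. i < n \<and> D x x' i < t} \<le> card {..<n}" by (rule card_mono) auto
  then show ?thesis unfolding Phi_D by (cases "n = 0") (auto simp: divide_le_eq_1)
qed


lemma arith_upper:
  fixes ofs R p e m cS :: nat
  assumes R: "R > 0" and p: "p > 0" and c: "cS \<le> ofs + R*(e+m)"
  shows "real cS / real (ofs+R*p) \<le> real ofs / real R + real e / real p + real m / real p"
proof -
  have pos: "real (ofs + R*p) > 0" using R p by (simp del: of_nat_add of_nat_mult)
  have "real cS / real (ofs+R*p) \<le> real (ofs + R*(e+m)) / real (ofs+R*p)"
  proof (rule divide_right_mono)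
    show "real cS \<le> real (ofs + R*(e+m))" using c by (simp only: of_nat_le_iff)
  qed (use pos in linarith)
  also have "\<dots> = real ofs / real (ofs+R*p) + real R * real (e+m) / real (ofs+R*p)"
    by (simp add: add_divide_distrib)
  also have "real ofs / real (ofs+R*p) \<le> real ofs / real R"
  proof (rule divide_left_mono)
    have "R \<le> R*p" using p by simp
    then have "R \<le> ofs + R*p" by linarith
    then show "real R \<le> real (ofs + R*p)" by (simp only: of_nat_le_iff)
  qed (use R p pos in \<open>auto intro!: mult_pos_pos simp del: of_nat_add of_nat_mult\<close>)
  also have "real R * real (e+m) / real (ofs+R*p) \<le> real R * real (e+m) / (real R * real p)"
  proof (rule divide_left_mono)
    show "real R * real p \<le> real (ofs + R*p)" by simp
  qed (use R p pos in \<open>auto intro!: mult_pos_pos simp del: of_nat_add of_nat_mult\<close>)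
  also have "real R * real (e+m) / (real R * real p) = real e / real p + real m / real p"
    using R by (simp add: add_divide_distrib)
  finally show ?thesis by simp
qed

lemma arith_lower:
  fixes ofs R p e m cS :: nat and \<eta> :: real
  assumes R: "R > 0" and p: "p > 0" and c: "R * (e - m) \<le> cS"
    and e: "real e \<ge> (1 - \<eta>) * p" and m: "real m \<le> \<eta> * p" and o: "real ofs \<le> \<eta> * R"
    and eta: "0 \<le> \<eta>" "\<eta> \<le> 1/2"
  shows "real cS / real (ofs+R*p) \<ge> 1 - 3 * \<eta>"
proof -
  have "\<eta> * p \<le> (1 - \<eta>) * p" using eta by (intro mult_right_mono) auto
  then have "real m \<le> real e" using e m by linarith
  then have me: "m \<le> e" by simp
  have "real cS \<ge> real R * (real e - real m)" using c me by (metis of_nat_diff of_nat_le_iff of_nat_mult)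
  moreover have "real e - real m \<ge> (1 - 2*\<eta>) * p" using e m by (simp add: algebra_simps)
  ultimately have c2: "real cS \<ge> real R * ((1 - 2*\<eta>) * p)"
    using mult_left_mono[of "(1 - 2*\<eta>) * p" "real e - real m" "real R"] by simp
  have rp: "real R * real p \<ge> real R" using p R by simp
  have den: "real (ofs + R*p) \<le> (1 + \<eta>) * (real R * real p)"
  proof -
    have "\<eta> * real R \<le> \<eta> * (real R * real p)" using mult_left_mono[OF rp eta(1)] .
    then show ?thesis using o by (simp add: algebra_simps)
  qed
  have pos: "real (ofs + R*p) > 0" using R p by (simp del: of_nat_add of_nat_mult)
  have "(1 - 3*\<eta>) * real (ofs + R*p) \<le> real cS"
  proof (cases "1 - 3*\<eta> \<ge> 0")
    case True
    have "(1 - 3*\<eta>) * real (ofs + R*p) \<le> (1 - 3*\<eta>) * ((1 + \<eta>) * (real R * real p))"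
      using mult_left_mono[OF den True] .
    also have "\<dots> \<le> (1 - 2*\<eta>) * (real R * real p)"
    proof -
      have "(1 - 3*\<eta>) * (1 + \<eta>) \<le> 1 - 2*\<eta>" using eta by (simp add: algebra_simps)
      then show ?thesis using R p by (metis mult.assoc mult_right_mono of_nat_0_le_iff zero_le_mult_iff)
    qed
    also have "\<dots> \<le> real cS" using c2 by (simp add: mult_ac)
    finally show ?thesis .
  next
    case False
    then have "(1 - 3*\<eta>) * real (ofs + R*p) \<le> 0" using pos by (simp add: mult_nonpos_nonneg)
    then show ?thesis by simp
  qed
  then show ?thesis using pos by (simp add: pos_le_divide_eq)
qed


lemma exists_small_pow: "(0::real) < d \<Longrightarrow> \<exists>m::nat. 1 / 2 ^ m < d"
  using real_arch_pow_inv[of d "1/2::real"] by (auto simp: power_one_over)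

theorem proposition3p7:
  fixes k :: nat and P :: "(nat \<Rightarrow> nat) set" and C :: "nat \<Rightarrow> nat list"
    and A1 :: "nat list" and y y' :: "nat \<Rightarrow> nat"
  assumes "k \<ge> 2"
    and "subshift k P"
    and "P \<noteq> FullShift k"
    and "range C = {w. contained P w}"
    and "set A1 \<subseteq> {..<k}"
    and "\<not> contained P A1"
    and "\<forall>z\<in>P. (\<lambda>n. real (length (C n))) \<in> o(\<lambda>n. real (length (Aw A1 C z n)))"
    and "y \<in> P" and "y' \<in> P"
    and "DC1 y y'"
  shows "DC1 (Tmap A1 C y) (Tmap A1 C y')"
proof -
  from assms(2) have Pne: "P \<noteq> {}" by (simp add: subshift_def)
  have A1ne: "A1 \<noteq> []"
  proof
    assume "A1 = []"
    then have "contained P A1" using Pne by (auto simp: contained_def is_prefix_def)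
    with assms(6) show False by simp
  qed
  define x where "x = Tmap A1 C y"
  define x' where "x' = Tmap A1 C y'"
  define a where "a n = length (Aw A1 C y n)" for n
  define c where "c n = length (C n)" for n
  have aS: "Suc n \<le> a n" for n using length_Aw_ge[OF A1ne] by (simp add: a_def)
  have blk: "\<forall>i < (a n)^2 * Suc n. x (a n + c n + i) = y (i mod Suc n) \<and> x' (a n + c n + i) = y' (i mod Suc n)" for n
  proof (intro allI impI)
    fix i assume i: "i < (a n)^2 * Suc n"
    have l: "length (Aw A1 C y' n) = a n" using length_Aw_indep[of A1 C y' n y] by (simp add: a_def)
    show "x (a n + c n + i) = y (i mod Suc n) \<and> x' (a n + c n + i) = y' (i mod Suc n)"
      using Tmap_block[OF A1ne, of i C y n] Tmap_block[OF A1ne, of i C y' n] i l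
      by (simp add: x_def x'_def a_def c_def)
  qed
  obtain n0 where n0: "\<And>n. n \<ge> n0 \<Longrightarrow> c n \<le> a n"
  proof -
    have "eventually (\<lambda>n. norm (real (length (C n))) \<le> 1 * norm (real (length (Aw A1 C y n)))) at_top"
      using assms(7) assms(8) by (intro landau_o.smallD) auto
    then obtain N where "\<And>n. n \<ge> N \<Longrightarrow> real (length (C n)) \<le> real (length (Aw A1 C y n))"
      by (auto simp: eventually_at_top_linorder)
    then show ?thesis using that by (auto simp: a_def c_def)
  qed
  have ofsR: "real (a n + c n) * real (Suc n) \<le> 2 * real ((a n)^2)" if "n \<ge> n0" for n
  proof -
    have "(a n + c n) * Suc n \<le> (2 * a n) * a n"
      using n0[OF that] aS[of n] by (intro mult_le_mono) auto
    then have "real ((a n + c n) * Suc n) \<le> real ((2 * a n) * a n)" by (simp only: of_nat_le_iff)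
    then show ?thesis by (simp add: power2_eq_square algebra_simps)
  qed
  have Rpos: "(a n)^2 > 0" for n using aS[of n] by simp
  from assms(10) obtain s where s: "s > 0" "liminf (\<lambda>n. ereal (Phi y y' n s)) = 0"
    and lsup: "\<And>t. t > 0 \<Longrightarrow> limsup (\<lambda>n. ereal (Phi y y' n t)) = 1"
    unfolding DC1_def by blast
  have part1: "liminf (\<lambda>N. ereal (Phi x x' N (s/2))) = 0"
  proof (rule liminf_zeroI[OF Phi_nonneg])
    fix e :: real and M :: nat assume e: "e > 0"
    obtain m :: nat where m: "1 / 2 ^ m < s / 2" using exists_small_pow[of "s/2"] s by auto
    define K where "K = nat \<lceil>(8 + 4 * real m) / e\<rceil>"
    obtain p where p: "p \<ge> max M (max (Suc n0) (Suc K))" and py: "Phi y y' p s < e/4"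
      using liminf_zeroD[OF s(2), of "e/4" "max M (max (Suc n0) (Suc K))"] e by auto
    obtain n where pn: "p = Suc n" using p by (cases p) auto
    have nn0: "n \<ge> n0" using p pn by simp
    define ofs where "ofs = a n + c n"
    define R where "R = (a n)^2"
    define N where "N = ofs + R * p"
    have blk': "\<forall>i<R*p. x (ofs+i) = y (i mod p) \<and> x' (ofs+i) = y' (i mod p)"
      using blk[of n] by (simp add: ofs_def R_def pn)
    have pR: "p \<le> R * p" using Rpos[of n] by (simp add: R_def)
    have "M \<le> p" using p by simp
    with pR have "M \<le> R * p" by linarith
    then have NM: "N \<ge> M" unfolding N_def by linarith
    have c1: "card {i. i < N \<and> D x x' i < s/2} \<le> ofs + R * (card {j. j < p \<and> D y y' j < s/2 + 1/2^m} + m)"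
      unfolding N_def by (rule block_upper[OF blk']) (simp add: pn)
    have "card {j. j < p \<and> D y y' j < s/2 + 1/2^m} \<le> card {j. j < p \<and> D y y' j < s}"
      using m by (intro card_mono) auto
    then have "R * (card {j. j < p \<and> D y y' j < s/2 + 1/2^m} + m) \<le> R * (card {j. j < p \<and> D y y' j < s} + m)"
      by simp
    with c1 have c2: "card {i. i < N \<and> D x x' i < s/2} \<le> ofs + R * (card {j. j < p \<and> D y y' j < s} + m)"
      by linarith
    have "Phi x x' N (s/2) \<le> real ofs / real R + real (card {j. j < p \<and> D y y' j < s}) / real p + real m / real p"
      unfolding Phi_D N_def by (rule arith_upper[OF _ _ c2[unfolded N_def]]) (use Rpos[of n] pn in \<open>auto simp: R_def\<close>)
    also have "real (card {j. j < p \<and> D y y' j < s}) / real p = Phi y y' p s" by (simp add: Phi_D)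
    also have "real ofs / real R \<le> 2 / real p"
    proof -
      have "real ofs * real p \<le> 2 * real R" using ofsR[OF nn0] by (simp add: ofs_def R_def pn)
      then show ?thesis using Rpos[of n] pn by (simp add: R_def field_simps)
    qed
    finally have bnd: "Phi x x' N (s/2) \<le> 2 / real p + Phi y y' p s + real m / real p" by simp
    have pK: "real p > (8 + 4 * real m) / e"
    proof -
      have "real K \<ge> (8 + 4 * real m) / e" unfolding K_def by linarith
      moreover have "Suc K \<le> p" using p by (simp add: max_def split: if_splits)
      then have "real p \<ge> real K + 1" by linarith
      ultimately show ?thesis by linarith
    qed
    then have pe: "real p * e > 8 + 4 * real m" using e by (simp add: field_simps)
    have "2 / real p < e/4" using pe pn by (simp add: field_simps)
    moreover have "real m / real p < e/4" using pe pn by (simp add: field_simps)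
    ultimately have "Phi x x' N (s/2) < e" using bnd py e by linarith
    with NM show "\<exists>N\<ge>M. Phi x x' N (s/2) < e" by blast
  qed
  have part2: "limsup (\<lambda>N. ereal (Phi x x' N t)) = 1" if t: "t > 0" for t
  proof (rule limsup_oneI[OF Phi_le1])
    fix e :: real and M :: nat assume e: "e > 0"
    define \<eta> where "\<eta> = min e 1 / 4"
    have eta: "\<eta> > 0" "\<eta> \<le> 1/2" "3 * \<eta> < e" using e by (auto simp: \<eta>_def)
    obtain m :: nat where m: "1 / 2 ^ m < t / 2" using exists_small_pow[of "t/2"] t by auto
    define K where "K = nat \<lceil>(2 + real m) / \<eta>\<rceil>"
    obtain p where p: "p \<ge> max M (max (Suc n0) (Suc K))" and py: "Phi y y' p (t/2) > 1 - \<eta>"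
      using limsup_oneD[OF lsup[of "t/2"], of \<eta> "max M (max (Suc n0) (Suc K))"] t eta by auto
    obtain n where pn: "p = Suc n" using p by (cases p) auto
    have nn0: "n \<ge> n0" using p pn by simp
    define ofs where "ofs = a n + c n"
    define R where "R = (a n)^2"
    define N where "N = ofs + R * p"
    define e0 where "e0 = card {j. j < p \<and> D y y' j < t/2}"
    have blk': "\<forall>i<R*p. x (ofs+i) = y (i mod p) \<and> x' (ofs+i) = y' (i mod p)"
      using blk[of n] by (simp add: ofs_def R_def pn)
    have pR: "p \<le> R * p" using Rpos[of n] by (simp add: R_def)
    have "M \<le> p" using p by simp
    with pR have "M \<le> R * p" by linarith
    then have NM: "N \<ge> M" unfolding N_def by linarith
    have c1: "R * (card {j. j < p \<and> D y y' j < t - 1/2^m} - m) \<le> card {i. i < N \<and> D x x' i < t}"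
      unfolding N_def by (rule block_lower[OF blk'])
    have "e0 \<le> card {j. j < p \<and> D y y' j < t - 1/2^m}"
      unfolding e0_def using m by (intro card_mono) auto
    then have c2: "R * (e0 - m) \<le> card {i. i < N \<and> D x x' i < t}"
      using c1 by (meson diff_le_mono le_trans mult_le_mono2)
    have pK: "real p > (2 + real m) / \<eta>"
    proof -
      have "real K \<ge> (2 + real m) / \<eta>" unfolding K_def by linarith
      moreover have "Suc K \<le> p" using p by (simp add: max_def split: if_splits)
      then have "real p \<ge> real K + 1" by linarith
      ultimately show ?thesis by linarith
    qed
    then have pe: "real p * \<eta> > 2 + real m" using eta by (simp add: field_simps)
    have e0b: "real e0 \<ge> (1 - \<eta>) * real p"
      using py pn unfolding Phi_D e0_def by (simp add: field_simps)
    have mb: "real m \<le> \<eta> * real p" using pe by (simp add: mult.commute)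
    have ob: "real ofs \<le> \<eta> * real R"
    proof -
      have "real ofs * real p \<le> 2 * real R" using ofsR[OF nn0] by (simp add: ofs_def R_def pn)
      also have "\<dots> \<le> (real p * \<eta>) * real R" using pe by (intro mult_right_mono) auto
      finally have "real ofs * real p \<le> (\<eta> * real R) * real p" by (simp add: mult_ac)
      then show ?thesis using pn by simp
    qed
    have "Phi x x' N t \<ge> 1 - 3 * \<eta>"
      unfolding Phi_D N_def
      by (rule arith_lower[OF _ _ c2[unfolded N_def] e0b mb ob]) (use Rpos[of n] pn eta in \<open>auto simp: R_def\<close>)
    then have "Phi x x' N t > 1 - e" using eta by linarith
    with NM show "\<exists>N\<ge>M. Phi x x' N t > 1 - e" by blast
  qed
  show ?thesis
    unfolding DC1_def x_def[symmetric] x'_def[symmetric]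
    using part1 part2 s(1) by (intro conjI) (auto intro!: exI[of _ "s/2"])
qed

end
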